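(* There exist absolute constants $C_1,C_2>0$ such that for every compact set $\Omega\subset\mathbb{R}^d$ and every $N$-dimensional linear subspace $X_N$ of the space of real-valued continuous functions on $\Omega$, there exists a set of $m\le C_1N$ points $\xi^1,\dots,\xi^m\in\Omega$ such that for every $f\in X_N$ $$ \|f\|_\infty\le C_2\sqrt{N}\max_{1\le j\le m}|f(\xi^j)|, $$ where $\|f\|_\infty=\max_{\mathbf x\in\Omega}|f(\mathbf x)|$. *)

theory Defs
  imports "HOL-Analysis.Analysis" "HOL-Library.Function_Algebras"
begin

text \<open>Points of R^d are encoded as functions x :: nat => real with x i = 0 for all i >= d;
  the type nat => real carries the product topology, which on this slice coincides
  with the Euclidean topology of R^d.\<close>

definition Rd :: "nat \<Rightarrow> (nat \<Rightarrow> real) set" where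
  "Rd d = {x. \<forall>i\<ge>d. x i = 0}"

definition fscale :: "real \<Rightarrow> ('a \<Rightarrow> real) \<Rightarrow> ('a \<Rightarrow> real)" where
  "fscale c f = (\<lambda>x. c * f x)"

text \<open>Elements of C(Omega) are represented as functions continuous on Omega and zero
  outside Omega (so that distinct representatives give distinct elements of C(Omega)).\<close>
definition Cfun :: "'a::topological_space set \<Rightarrow> ('a \<Rightarrow> real) set" where
  "Cfun \<Omega> = {f. continuous_on \<Omega> f \<and> (\<forall>x. x \<notin> \<Omega> \<longrightarrow> f x = 0)}"

definition dim_subspace_C :: "'a::topological_space set \<Rightarrow> ('a \<Rightarrow> real) set \<Rightarrow> nat \<Rightarrow> bool" where
  "dim_subspace_C \<Omega> X N \<longleftrightarrow> X \<subseteq> Cfun \<Omega> \<and> module.subspace fscale X \<and>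
     (\<exists>B. finite B \<and> card B = N \<and> \<not> module.dependent fscale B \<and>
          module.span fscale B = X)"

end

theory Submission
  imports Defs "Jordan_Normal_Form.Determinant"
begin


abbreviation mdet :: "real mat \<Rightarrow> real" where "mdet \<equiv> Determinant.det"

definition dotp :: "nat \<Rightarrow> (nat \<Rightarrow> real) \<Rightarrow> (nat \<Rightarrow> real) \<Rightarrow> real" where
  "dotp n x y = (\<Sum>i<n. x i * y i)"
definition mvp :: "nat \<Rightarrow> real mat \<Rightarrow> (nat \<Rightarrow> real) \<Rightarrow> nat \<Rightarrow> real" where
  "mvp n M x = (\<lambda>i. \<Sum>l<n. M $$ (i,l) * x l)"
definition outerm :: "nat \<Rightarrow> (nat \<Rightarrow> real) \<Rightarrow> (nat \<Rightarrow> real) \<Rightarrow> real mat" where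
  "outerm n x y = Matrix.mat n n (\<lambda>(i,j). x i * y j)"
definition colm :: "nat \<Rightarrow> (nat \<Rightarrow> real) \<Rightarrow> real mat" where
  "colm n x = Matrix.mat n 1 (\<lambda>(i,j). x i)"
definition rowm :: "nat \<Rightarrow> (nat \<Rightarrow> real) \<Rightarrow> real mat" where
  "rowm n x = Matrix.mat 1 n (\<lambda>(i,j). x j)"
definition onem :: "real \<Rightarrow> real mat" where
  "onem c = Matrix.mat 1 1 (\<lambda>_. c)"

lemma carr[simp]: "colm n x \<in> carrier_mat n 1" "rowm n x \<in> carrier_mat 1 n" "onem c \<in> carrier_mat 1 1"
  "outerm n x y \<in> carrier_mat n n"
  by (auto simp: colm_def rowm_def onem_def outerm_def)


lemma onem_mult: "onem a * onem b = onem (a * b)"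
  by (rule eq_matI) (auto simp: onem_def scalar_prod_def)

lemma onem_rowm: "onem a * rowm n y = rowm n (\<lambda>j. a * y j)"
  by (rule eq_matI) (auto simp: onem_def rowm_def scalar_prod_def)

lemma colm_onem: "colm n z * onem a = colm n (\<lambda>i. z i * a)"
  by (rule eq_matI) (auto simp: onem_def colm_def scalar_prod_def)

lemma colm_rowm: "colm n z * rowm n y = outerm n z y"
  by (rule eq_matI) (auto simp: outerm_def colm_def rowm_def scalar_prod_def)

lemma rowm_colm: "rowm n y * colm n z = onem (dotp n y z)"
  by (rule eq_matI) (auto simp: onem_def colm_def rowm_def scalar_prod_def dotp_def atLeast0LessThan)

lemma outer_neg: "outerm n z (\<lambda>j. - y j) + (1\<^sub>m n + outerm n z y) = 1\<^sub>m n"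
  by (rule eq_matI) (auto simp: outerm_def)

lemma add_zeros[simp]: "onem a + 0\<^sub>m 1 1 = onem a" "rowm n y + 0\<^sub>m 1 n = rowm n y"
  "colm n z + 0\<^sub>m n 1 = colm n z" "0\<^sub>m 1 1 + onem a = onem a" "0\<^sub>m 1 n + rowm n y = rowm n y"
  "0\<^sub>m n 1 + colm n z = colm n z"
  "onem a + 0\<^sub>m (Suc 0) (Suc 0) = onem a" "rowm n y + 0\<^sub>m (Suc 0) n = rowm n y"
  "colm n z + 0\<^sub>m n (Suc 0) = colm n z"
  "0\<^sub>m (Suc 0) (Suc 0) + onem a = onem a" "0\<^sub>m (Suc 0) n + rowm n y = rowm n y"
  "0\<^sub>m n (Suc 0) + colm n z = colm n z"
  by (auto intro!: eq_matI simp: onem_def rowm_def colm_def)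

lemma mult_zeros[simp]: "onem a * 0\<^sub>m (Suc 0) n = 0\<^sub>m (Suc 0) n" "0\<^sub>m n (Suc 0) * onem a = 0\<^sub>m n (Suc 0)"
  "onem a * 0\<^sub>m 1 n = 0\<^sub>m 1 n" "0\<^sub>m n 1 * onem a = 0\<^sub>m n 1"
  by (auto intro!: eq_matI simp: onem_def scalar_prod_def)

lemma dotp_neg: "dotp n (\<lambda>j. - y j) z = - dotp n y z"
  by (simp add: dotp_def sum_negf)

lemma onem_add: "onem a + onem b = onem (a + b)"
  by (rule eq_matI) (auto simp: onem_def)

lemma det_one_outer: "mdet (1\<^sub>m n + outerm n z y) = 1 + dotp n y z"
proof -
  define M where "M = four_block_mat (onem 1) (rowm n (\<lambda>j. - y j)) (colm n z) (1\<^sub>m n)"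
  define L where "L = four_block_mat (onem 1) (0\<^sub>m 1 n) (colm n z) (1\<^sub>m n + outerm n z y)"
  define U where "U = four_block_mat (onem 1) (rowm n (\<lambda>j. - y j)) (0\<^sub>m n 1) (1\<^sub>m n)"
  define U' where "U' = four_block_mat (onem (1 + dotp n y z)) (rowm n (\<lambda>j. - y j)) (0\<^sub>m n 1) (1\<^sub>m n)"
  define L' where "L' = four_block_mat (onem 1) (0\<^sub>m 1 n) (colm n z) (1\<^sub>m n)"
  have c1: "1\<^sub>m n + outerm n z y \<in> carrier_mat n n" by simp
  have LU: "L * U = M"
    unfolding L_def U_def M_def
    by (subst mult_four_block_mat[OF carr(3) zero_carrier_mat carr(1) c1 carr(3) carr(2) zero_carrier_mat one_carrier_mat])
      (simp add: onem_mult onem_rowm colm_onem colm_rowm outer_neg c1 right_mult_zero_mat[OF c1] right_mult_one_mat[OF c1])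
  have UL: "U' * L' = M"
    unfolding L'_def U'_def M_def
    by (subst mult_four_block_mat[OF carr(3) carr(2) zero_carrier_mat one_carrier_mat carr(3) zero_carrier_mat carr(1) one_carrier_mat])
      (simp add: onem_mult onem_rowm colm_onem rowm_colm onem_add dotp_neg right_mult_zero_mat[OF carr(3)]
         right_mult_one_mat[OF carr(2)] left_mult_zero_mat[OF carr(3)] left_mult_one_mat[OF carr(1)])
  have dL: "mdet L = mdet (1\<^sub>m n + outerm n z y)"
    unfolding L_def
    by (subst det_four_block_mat_upper_right_zero[OF carr(3) refl carr(1) c1]) (simp add: det_single onem_def)
  have dU: "mdet U = 1"
    unfolding U_def
    by (subst det_four_block_mat_lower_left_zero[OF carr(3) carr(2) refl one_carrier_mat]) (simp add: det_single onem_def)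
  have dU': "mdet U' = 1 + dotp n y z"
    unfolding U'_def
    by (subst det_four_block_mat_lower_left_zero[OF carr(3) carr(2) refl one_carrier_mat]) (simp add: det_single onem_def)
  have dL': "mdet L' = 1"
    unfolding L'_def
    by (subst det_four_block_mat_upper_right_zero[OF carr(3) refl carr(1) one_carrier_mat]) (simp add: det_single onem_def)
  have cL: "L \<in> carrier_mat (1+n) (1+n)" "U \<in> carrier_mat (1+n) (1+n)"
     "L' \<in> carrier_mat (1+n) (1+n)" "U' \<in> carrier_mat (1+n) (1+n)"
    unfolding L_def U_def L'_def U'_def
    by (rule four_block_carrier_mat[OF carr(3) c1] four_block_carrier_mat[OF carr(3) one_carrier_mat])+
  have "mdet M = mdet (1\<^sub>m n + outerm n z y)"
    using LU det_mult[OF cL(1,2)] dL dU by simp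
  moreover have "mdet M = 1 + dotp n y z"
    using UL det_mult[OF cL(4,3)] dU' dL' by simp
  ultimately show ?thesis by simp
qed

lemma mult_entry: "A \<in> carrier_mat n n \<Longrightarrow> B \<in> carrier_mat n n \<Longrightarrow> i < n \<Longrightarrow> j < n \<Longrightarrow>
  (A * B) $$ (i,j) = (\<Sum>p<n. A $$ (i,p) * B $$ (p,j))"
  by (simp add: scalar_prod_def atLeast0LessThan)

lemma mvp_mult: assumes "A \<in> carrier_mat n n" "B \<in> carrier_mat n n" "i < n"
  shows "mvp n A (mvp n B x) i = mvp n (A * B) x i"
proof -
  have "mvp n A (mvp n B x) i = (\<Sum>p<n. \<Sum>l<n. A $$ (i,p) * B $$ (p,l) * x l)"
    by (simp add: mvp_def sum_distrib_left mult.assoc)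
  also have "\<dots> = (\<Sum>l<n. \<Sum>p<n. A $$ (i,p) * B $$ (p,l) * x l)" by (rule sum.swap)
  also have "\<dots> = mvp n (A * B) x i"
    using assms by (simp del: index_mult_mat add: mvp_def mult_entry sum_distrib_right)
  finally show ?thesis .
qed

lemma mvp_one: assumes "i < n" shows "mvp n (1\<^sub>m n) x i = x i"
proof -
  have "mvp n (1\<^sub>m n) x i = (\<Sum>l<n. (if i = l then x l else 0))"
    unfolding mvp_def using assms by (intro sum.cong) auto
  thus ?thesis using assms by simp
qed

lemma mult_outer: assumes "A \<in> carrier_mat n n"
  shows "A * outerm n z y = outerm n (mvp n A z) y"
proof (rule eq_matI)
  fix i j assume ij: "i < dim_row (outerm n (mvp n A z) y)" "j < dim_col (outerm n (mvp n A z) y)"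
  hence ij': "i < n" "j < n" by (auto simp: outerm_def)
  have "(A * outerm n z y) $$ (i, j) = (\<Sum>p<n. A $$ (i,p) * outerm n z y $$ (p,j))"
    by (rule mult_entry[OF assms carr(4) ij'])
  also have "\<dots> = (\<Sum>p<n. A $$ (i,p) * (z p * y j))"
    by (rule sum.cong) (auto simp: outerm_def ij')
  also have "\<dots> = outerm n (mvp n A z) y $$ (i, j)"
    using ij' by (simp add: outerm_def mvp_def sum_distrib_right mult.assoc)
  finally show "(A * outerm n z y) $$ (i, j) = outerm n (mvp n A z) y $$ (i, j)" .
qed (use assms in \<open>auto simp: outerm_def\<close>)

lemma det_rank1: assumes A: "A \<in> carrier_mat n n" and B: "B \<in> carrier_mat n n" and AB: "A * B = 1\<^sub>m n"
  shows "mdet (A + outerm n x y) = mdet A * (1 + dotp n y (mvp n B x))"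
proof -
  have "A * (1\<^sub>m n + outerm n (mvp n B x) y) = A + outerm n x y"
  proof -
    have "A * (1\<^sub>m n + outerm n (mvp n B x) y) = A * 1\<^sub>m n + A * outerm n (mvp n B x) y"
      using A by (simp add: mult_add_distrib_mat[OF A one_carrier_mat carr(4)])
    also have "A * outerm n (mvp n B x) y = outerm n x y"
      unfolding mult_outer[OF A]
      by (rule eq_matI) (auto simp: outerm_def mvp_mult[OF A B] AB mvp_one)
    finally show ?thesis using A by simp
  qed
  hence "mdet (A + outerm n x y) = mdet A * mdet (1\<^sub>m n + outerm n (mvp n B x) y)"
    using det_mult[OF A, of "1\<^sub>m n + outerm n (mvp n B x) y"] by simp
  thus ?thesis by (simp add: det_one_outer)
qed


definition gram :: "nat \<Rightarrow> nat \<Rightarrow> (nat \<Rightarrow> nat \<Rightarrow> real) \<Rightarrow> real mat" where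
  "gram n m W = Matrix.mat n n (\<lambda>(i,l). \<Sum>j<m. W j i * W j l)"

definition invm :: "real mat \<Rightarrow> real mat" where
  "invm G = (1 / mdet G) \<cdot>\<^sub>m adj_mat G"

lemma gram_index: "i < n \<Longrightarrow> l < n \<Longrightarrow> gram n m W $$ (i,l) = (\<Sum>j<m. W j i * W j l)"
  by (simp add: gram_def)

lemma gram_carr[simp]: "gram n m W \<in> carrier_mat n n" by (simp add: gram_def)

lemma inv_props:
  assumes G: "G \<in> carrier_mat n n" and d: "mdet G \<noteq> 0"
  shows "invm G \<in> carrier_mat n n" "G * invm G = 1\<^sub>m n" "invm G * G = 1\<^sub>m n"
proof -
  note a = adj_mat[OF G]
  show c: "invm G \<in> carrier_mat n n" using a by (simp add: invm_def)
  have "G * invm G = (1 / mdet G) \<cdot>\<^sub>m (G * adj_mat G)"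
    unfolding invm_def by (rule mult_smult_distrib[OF G a(1)])
  also have "\<dots> = 1\<^sub>m n" using d by (simp add: a(2)) (rule eq_matI, auto)
  finally show "G * invm G = 1\<^sub>m n" .
  have "invm G * G = (1 / mdet G) \<cdot>\<^sub>m (adj_mat G * G)"
    unfolding invm_def by (rule mult_smult_assoc_mat[OF a(1) G])
  also have "\<dots> = 1\<^sub>m n" using d by (simp add: a(3)) (rule eq_matI, auto)
  finally show "invm G * G = 1\<^sub>m n" .
qed

lemma inv_sym:
  assumes G: "G \<in> carrier_mat n n" and d: "mdet G \<noteq> 0" and sym: "transpose_mat G = G"
  shows "transpose_mat (invm G) = invm G"
proof -
  note p = inv_props[OF G d]
  have tH: "transpose_mat (invm G) \<in> carrier_mat n n" using p(1) by simp
  have "transpose_mat (invm G) * G = 1\<^sub>m n"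
    using arg_cong[OF p(2), of transpose_mat] transpose_mult[OF G p(1)] sym by simp
  note tG = this
  have "transpose_mat (invm G) = transpose_mat (invm G) * 1\<^sub>m n"
    using tH by simp
  also have "\<dots> = transpose_mat (invm G) * (G * invm G)" using p(2) by simp
  also have "\<dots> = (transpose_mat (invm G) * G) * invm G"
    using tH G p(1) by simp
  also have "\<dots> = invm G" using tG p(1) by simp
  finally show ?thesis .
qed

lemma gram_sym: "transpose_mat (gram n m W) = gram n m W"
  by (rule eq_matI) (auto simp: gram_def mult.commute)


lemma idx_add_outer: "G \<in> carrier_mat n n \<Longrightarrow> i < n \<Longrightarrow> p < n \<Longrightarrow>
   (G + outerm n v w) $$ (i,p) = G $$ (i,p) + v i * w p"
  by (simp add: outerm_def)

lemma idx_minus_outer: "H \<in> carrier_mat n n \<Longrightarrow> p < n \<Longrightarrow> l < n \<Longrightarrow>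
   (H - c \<cdot>\<^sub>m outerm n y z) $$ (p,l) = H $$ (p,l) - c * (y p * z l)"
  by (simp add: outerm_def)

lemma dot_comm: "dotp n x y = dotp n y x"
  by (simp add: dotp_def mult.commute)

lemma dot_cong: "(\<And>i. i < n \<Longrightarrow> x i = x' i) \<Longrightarrow> dotp n x z = dotp n x' z"
  by (simp add: dotp_def)

lemma dot_G: "dotp n x (mvp n (gram n m W) y) = (\<Sum>j<m. dotp n x (W j) * dotp n y (W j))"
proof -
  have "dotp n x (mvp n (gram n m W) y) = (\<Sum>i<n. \<Sum>l<n. \<Sum>j<m. x i * W j i * (y l * W j l))"
    unfolding dotp_def mvp_def
  proof (intro sum.cong refl)
    fix i assume i: "i \<in> {..<n}"
    have "x i * (\<Sum>l<n. gram n m W $$ (i,l) * y l) = (\<Sum>l<n. x i * (gram n m W $$ (i,l) * y l))"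
      by (rule sum_distrib_left)
    also have "\<dots> = (\<Sum>l<n. \<Sum>j<m. x i * W j i * (y l * W j l))"
    proof (intro sum.cong refl)
      fix l assume l: "l \<in> {..<n}"
      have "x i * (gram n m W $$ (i,l) * y l) = x i * ((\<Sum>j<m. W j i * W j l) * y l)"
        using i l by (simp add: gram_def)
      also have "\<dots> = (\<Sum>j<m. x i * W j i * (y l * W j l))"
        by (simp add: sum_distrib_left sum_distrib_right ac_simps)
      finally show "x i * (gram n m W $$ (i,l) * y l) = (\<Sum>j<m. x i * W j i * (y l * W j l))" .
    qed
    finally show "x i * (\<Sum>l<n. gram n m W $$ (i,l) * y l) = (\<Sum>l<n. \<Sum>j<m. x i * W j i * (y l * W j l))" .
  qed
  also have "\<dots> = (\<Sum>i<n. \<Sum>j<m. \<Sum>l<n. x i * W j i * (y l * W j l))"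
    by (rule sum.cong[OF refl], rule sum.swap)
  also have "\<dots> = (\<Sum>j<m. \<Sum>i<n. \<Sum>l<n. x i * W j i * (y l * W j l))"
    by (rule sum.swap)
  also have "\<dots> = (\<Sum>j<m. dotp n x (W j) * dotp n y (W j))"
    by (simp add: dotp_def sum_product)
  finally show ?thesis .
qed


context
  fixes n m :: nat and W :: "nat \<Rightarrow> nat \<Rightarrow> real"
  assumes dG: "mdet (gram n m W) \<noteq> 0"
begin

abbreviation "GG \<equiv> gram n m W"
abbreviation "HH \<equiv> invm (gram n m W)"

lemma HHc: "HH \<in> carrier_mat n n" and GH: "GG * HH = 1\<^sub>m n" and HG: "HH * GG = 1\<^sub>m n"
  using inv_props[OF gram_carr dG] by auto

lemma HH_sym: "i < n \<Longrightarrow> l < n \<Longrightarrow> HH $$ (i,l) = HH $$ (l,i)"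
  using inv_sym[OF gram_carr dG gram_sym] HHc
  by (metis carrier_matD(1) carrier_matD(2) index_transpose_mat(1))

lemma mvpGH: "i < n \<Longrightarrow> mvp n GG (mvp n HH v) i = v i"
  by (simp add: mvp_mult[OF gram_carr HHc] GH mvp_one)

lemma dot_H_sym: "dotp n x (mvp n HH y) = dotp n (mvp n HH x) y"
proof -
  have "dotp n x (mvp n HH y) = (\<Sum>i<n. \<Sum>l<n. x i * HH $$ (i,l) * y l)"
    by (simp add: dotp_def mvp_def sum_distrib_left mult.assoc)
  also have "\<dots> = (\<Sum>l<n. \<Sum>i<n. x i * HH $$ (i,l) * y l)" by (rule sum.swap)
  also have "\<dots> = (\<Sum>l<n. \<Sum>i<n. HH $$ (l,i) * x i * y l)"
    by (intro sum.cong refl) (simp add: HH_sym mult.commute)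
  also have "\<dots> = dotp n (mvp n HH x) y"
    by (simp add: dotp_def mvp_def sum_distrib_right)
  finally show ?thesis .
qed

lemma trace_HG: "(\<Sum>k<m. dotp n (W k) (mvp n HH (W k))) = real n"
proof -
  have "(\<Sum>k<m. dotp n (W k) (mvp n HH (W k))) = (\<Sum>k<m. \<Sum>i<n. \<Sum>l<n. HH $$ (i,l) * (W k l * W k i))"
    unfolding dotp_def mvp_def
    by (intro sum.cong refl) (simp add: sum_distrib_left ac_simps)
  also have "\<dots> = (\<Sum>i<n. \<Sum>k<m. \<Sum>l<n. HH $$ (i,l) * (W k l * W k i))" by (rule sum.swap)
  also have "\<dots> = (\<Sum>i<n. \<Sum>l<n. \<Sum>k<m. HH $$ (i,l) * (W k l * W k i))"
    by (rule sum.cong[OF refl], rule sum.swap)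
  also have "\<dots> = (\<Sum>i<n. \<Sum>l<n. HH $$ (i,l) * GG $$ (l,i))"
    by (intro sum.cong refl) (simp add: gram_index sum_distrib_left ac_simps)
  also have "\<dots> = (\<Sum>i<n. (HH * GG) $$ (i,i))"
    by (intro sum.cong refl) (simp del: index_mult_mat add: mult_entry[OF HHc gram_carr])
  also have "\<dots> = (\<Sum>i<n. 1)"
    by (intro sum.cong refl) (simp add: HG)
  finally show ?thesis by simp
qed

definition qf :: "(nat \<Rightarrow> real) \<Rightarrow> real" where "qf v = dotp n v (mvp n HH v)"

lemma q_sq: "qf v = (\<Sum>j<m. (dotp n (mvp n HH v) (W j))\<^sup>2)"
proof -
  have "qf v = dotp n (mvp n GG (mvp n HH v)) (mvp n HH v)"
    unfolding qf_def by (rule dot_cong) (simp add: mvpGH)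
  also have "\<dots> = dotp n (mvp n HH v) (mvp n GG (mvp n HH v))" by (rule dot_comm)
  also have "\<dots> = (\<Sum>j<m. (dotp n (mvp n HH v) (W j))\<^sup>2)"
    by (simp add: dot_G power2_eq_square)
  finally show ?thesis .
qed

lemma qf_nonneg: "qf v \<ge> 0"
  by (simp add: q_sq sum_nonneg)

lemma CS_q: "(dotp n a v)\<^sup>2 \<le> (\<Sum>j<m. (dotp n a (W j))\<^sup>2) * qf v"
proof -
  have "dotp n a v = dotp n a (mvp n GG (mvp n HH v))"
    by (subst (2) dot_comm, subst (1) dot_comm, rule dot_cong) (simp add: mvpGH)
  also have "\<dots> = (\<Sum>j<m. dotp n a (W j) * dotp n (mvp n HH v) (W j))" by (rule dot_G)
  finally have "(dotp n a v)\<^sup>2 = (\<Sum>j<m. dotp n a (W j) * dotp n (mvp n HH v) (W j))\<^sup>2" by simp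
  also have "\<dots> \<le> (\<Sum>j<m. (dotp n a (W j))\<^sup>2) * (\<Sum>j<m. (dotp n (mvp n HH v) (W j))\<^sup>2)"
    by (rule Cauchy_Schwarz_ineq_sum)
  finally show ?thesis by (simp add: q_sq)
qed

lemma bsum: "(\<Sum>k<m. (dotp n (W k) (mvp n HH v))\<^sup>2) = qf v"
  by (simp add: q_sq dot_comm)



lemma gram_upd: assumes k: "k < m"
  shows "gram n m (W(k := v)) = (GG + outerm n v v) + outerm n (W k) (\<lambda>i. - W k i)"
proof (rule eq_matI)
  fix i l assume "i < dim_row (GG + outerm n v v + outerm n (W k) (\<lambda>i. - W k i))"
     "l < dim_col (GG + outerm n v v + outerm n (W k) (\<lambda>i. - W k i))"
  hence il: "i < n" "l < n" by (auto simp: outerm_def)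
  have r: "(\<Sum>j<m. (W(k := v)) j i * (W(k := v)) j l) = v i * v l + (\<Sum>j\<in>{..<m}-{k}. W j i * W j l)"
    using k by (simp add: sum.remove[of "{..<m}" k])
  have r2: "(\<Sum>j<m. W j i * W j l) = W k i * W k l + (\<Sum>j\<in>{..<m}-{k}. W j i * W j l)"
    using k by (simp add: sum.remove[of "{..<m}" k])
  show "gram n m (W(k := v)) $$ (i, l) = (GG + outerm n v v + outerm n (W k) (\<lambda>i. - W k i)) $$ (i, l)"
    using il r r2 by (simp add: gram_index outerm_def)
qed (auto simp: outerm_def gram_def)


lemma det_replace: assumes k: "k < m"
  shows "mdet (gram n m (W(k := v))) =
    mdet GG * ((1 + qf v) * (1 - qf (W k)) + (dotp n (W k) (mvp n HH v))\<^sup>2)"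
proof -
  define y where "y = mvp n HH v"
  define w where "w = W k"
  define q where "q = qf v"
  define c where "c = 1 / (1 + q)"
  have q0: "q \<ge> 0" unfolding q_def by (rule qf_nonneg)
  have cq: "c * (1 + q) = 1" unfolding c_def using q0 by simp
  define A where "A = GG + outerm n v v"
  define K where "K = HH - c \<cdot>\<^sub>m outerm n y y"
  have Ac: "A \<in> carrier_mat n n" unfolding A_def by simp
  have Kc: "K \<in> carrier_mat n n" unfolding K_def using HHc by (intro minus_carrier_mat) auto
  have dA: "mdet A = mdet GG * (1 + q)"
    unfolding A_def q_def qf_def using det_rank1[OF gram_carr HHc GH] by simp
  have s1: "(\<Sum>p<n. GG $$ (i,p) * y p) = v i" if "i < n" for i
    using mvpGH[OF that, of v] by (simp add: mvp_def y_def)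
  have s2: "(\<Sum>p<n. v p * HH $$ (p,l)) = y l" if "l < n" for l
    unfolding y_def mvp_def using that by (intro sum.cong refl) (simp add: HH_sym mult.commute)
  have s3: "(\<Sum>p<n. v p * y p) = q" unfolding q_def qf_def dotp_def y_def by simp
  have AK: "A * K = 1\<^sub>m n"
  proof (rule eq_matI)
    fix i l assume "i < dim_row (1\<^sub>m n :: real mat)" "l < dim_col (1\<^sub>m n :: real mat)"
    hence il: "i < n" "l < n" by auto
    have "(A * K) $$ (i,l) = (\<Sum>p<n. A $$ (i,p) * K $$ (p,l))"
      by (rule mult_entry[OF Ac Kc il])
    also have "\<dots> = (\<Sum>p<n. (GG $$ (i,p) + v i * v p) * (HH $$ (p,l) - c * (y p * y l)))"
    proof (rule sum.cong[OF refl])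
      fix p assume "p \<in> {..<n}"
      hence p: "p < n" by simp
      have "A $$ (i,p) = GG $$ (i,p) + v i * v p"
        unfolding A_def by (rule idx_add_outer[OF gram_carr il(1) p])
      moreover have "K $$ (p,l) = HH $$ (p,l) - c * (y p * y l)"
        unfolding K_def by (rule idx_minus_outer[OF HHc p il(2)])
      ultimately show "A $$ (i,p) * K $$ (p,l) = (GG $$ (i,p) + v i * v p) * (HH $$ (p,l) - c * (y p * y l))"
        by simp
    qed
    also have "\<dots> = (\<Sum>p<n. GG $$ (i,p) * HH $$ (p,l)) - c * y l * (\<Sum>p<n. GG $$ (i,p) * y p)
        + v i * (\<Sum>p<n. v p * HH $$ (p,l)) - c * v i * y l * (\<Sum>p<n. v p * y p)"
    proof -
      have pt: "(GG $$ (i,p) + v i * v p) * (HH $$ (p,l) - c * (y p * y l)) =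
         GG $$ (i,p) * HH $$ (p,l) - (c * y l) * (GG $$ (i,p) * y p) + v i * (v p * HH $$ (p,l))
         - (c * v i * y l) * (v p * y p)" for p
        by (simp add: algebra_simps)
      show ?thesis unfolding pt sum_subtractf sum.distrib sum_distrib_left[symmetric] ..
    qed
    also have "(\<Sum>p<n. GG $$ (i,p) * HH $$ (p,l)) = (GG * HH) $$ (i,l)"
      by (rule mult_entry[OF gram_carr HHc il, symmetric])
    also have "\<dots> = (1\<^sub>m n :: real mat) $$ (i,l)" by (simp add: GH)
    finally have "(A * K) $$ (i,l) = (1\<^sub>m n :: real mat) $$ (i,l) + v i * y l * (1 - c * (1 + q))"
      using s1[OF il(1)] s2[OF il(2)] s3 by (simp add: algebra_simps)
    thus "(A * K) $$ (i,l) = (1\<^sub>m n :: real mat) $$ (i,l)" using cq by simp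
  qed (use Ac Kc in auto)
  have dG': "mdet (A + outerm n w (\<lambda>i. - w i)) = mdet A * (1 + dotp n (\<lambda>i. - w i) (mvp n K w))"
    by (rule det_rank1[OF Ac Kc AK])
  have mK: "mvp n K w i = mvp n HH w i - c * y i * dotp n y w" if "i < n" for i
  proof -
    have "mvp n K w i = (\<Sum>l<n. (HH $$ (i,l) - c * (y i * y l)) * w l)"
      unfolding mvp_def using that HHc by (intro sum.cong refl) (auto simp: K_def outerm_def)
    thus ?thesis by (simp add: mvp_def dotp_def algebra_simps sum_subtractf sum_distrib_left)
  qed
  have "dotp n (\<lambda>i. - w i) (mvp n K w) = dotp n (\<lambda>i. - w i) (\<lambda>i. mvp n HH w i - c * y i * dotp n y w)"
    by (simp add: dotp_def mK)
  also have "\<dots> = - qf w + c * (dotp n y w)\<^sup>2"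
    by (simp add: qf_def dotp_def algebra_simps sum_subtractf sum_distrib_left sum_negf power2_eq_square)
  finally have dd: "dotp n (\<lambda>i. - w i) (mvp n K w) = - qf w + c * (dotp n y w)\<^sup>2" .
  have "mdet (gram n m (W(k := v))) = mdet GG * (1 + q) * (1 - qf w + c * (dotp n y w)\<^sup>2)"
    using gram_upd[OF k] dG' dA dd unfolding A_def w_def by simp
  also have "\<dots> = mdet GG * ((1 + q) * (1 - qf w) + (c * (1 + q)) * (dotp n y w)\<^sup>2)"
    by (simp add: algebra_simps)
  also have "\<dots> = mdet GG * ((1 + q) * (1 - qf w) + (dotp n y w)\<^sup>2)"
    by (simp only: cq mult_1)
  also have "dotp n y w = dotp n (W k) (mvp n HH v)" by (simp add: y_def w_def dot_comm)
  finally show ?thesis unfolding q_def w_def .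
qed



lemma key_bound:
  assumes m: "m = 2 * n" and n: "n \<ge> 1"
    and opt: "\<And>k. k < m \<Longrightarrow> \<bar>mdet (gram n m (W(k := v)))\<bar> \<le> (1 + 1 / (2 * real n)) * \<bar>mdet GG\<bar>"
  shows "(dotp n a v)\<^sup>2 \<le> (\<Sum>j<m. (dotp n a (W j))\<^sup>2)"
proof -
  define q where "q = qf v"
  define R where "R k = (1 + q) * (1 - qf (W k)) + (dotp n (W k) (mvp n HH v))\<^sup>2" for k
  have Rk: "R k \<le> 1 + 1 / (2 * real n)" if k: "k < m" for k
  proof -
    have "mdet (gram n m (W(k := v))) = mdet GG * R k"
      unfolding R_def q_def by (rule det_replace[OF k])
    hence "\<bar>mdet GG\<bar> * \<bar>R k\<bar> \<le> (1 + 1 / (2 * real n)) * \<bar>mdet GG\<bar>"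
      using opt[OF k] by (simp add: abs_mult)
    hence "\<bar>R k\<bar> \<le> 1 + 1 / (2 * real n)" using dG by (simp add: mult.commute)
    thus ?thesis by simp
  qed
  have "(\<Sum>k<m. R k) \<le> (\<Sum>k<m. 1 + 1 / (2 * real n))"
    by (rule sum_mono) (simp add: Rk)
  also have "\<dots> = 2 * real n + 1" using m n by (simp add: algebra_simps)
  finally have S: "(\<Sum>k<m. R k) \<le> 2 * real n + 1" .
  have "(\<Sum>k<m. R k) = (1 + q) * (real m - (\<Sum>k<m. qf (W k))) + (\<Sum>k<m. (dotp n (W k) (mvp n HH v))\<^sup>2)"
    by (simp add: R_def sum.distrib sum_subtractf sum_distrib_left[symmetric])
  also have "\<dots> = (1 + q) * (real m - real n) + q"
    using trace_HG bsum unfolding qf_def q_def by simp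
  finally have "(1 + q) * (real m - real n) + q \<le> 2 * real n + 1" using S by simp
  hence "(1 + q) * real n + q \<le> 2 * real n + 1" using m by simp
  hence "q * (real n + 1) \<le> 1 * (real n + 1)" by (simp add: algebra_simps)
  hence q1: "q \<le> 1" by (rule mult_right_le_imp_le) simp
  have "(dotp n a v)\<^sup>2 \<le> (\<Sum>j<m. (dotp n a (W j))\<^sup>2) * q"
    unfolding q_def by (rule CS_q)
  also have "\<dots> \<le> (\<Sum>j<m. (dotp n a (W j))\<^sup>2) * 1"
    by (rule mult_left_mono[OF q1]) (simp add: sum_nonneg)
  finally show ?thesis by simp
qed


end



lemma module_fscale: "Modules.module (fscale :: real \<Rightarrow> ('a \<Rightarrow> real) \<Rightarrow> 'a \<Rightarrow> real)"
  by unfold_locales (auto simp: fscale_def plus_fun_def algebra_simps)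

lemma vs_fscale: "Vector_Spaces.vector_space (fscale :: real \<Rightarrow> ('a \<Rightarrow> real) \<Rightarrow> 'a \<Rightarrow> real)"
  using module_fscale unfolding vector_space_def Modules.module_def .

lemma sum_fun_app: "(sum g S) x = (\<Sum>b\<in>S. (g b :: 'a \<Rightarrow> real) x)"
  by (induction S rule: infinite_finite_induct) auto

lemma det_bound:
  assumes A: "A \<in> carrier_mat n n" and b: "\<And>i j. i < n \<Longrightarrow> j < n \<Longrightarrow> \<bar>A $$ (i,j)\<bar> \<le> c"
  shows "\<bar>mdet A\<bar> \<le> fact n * c ^ n"
proof -
  have "\<bar>mdet A\<bar> = \<bar>\<Sum>p | p permutes {0..<n}. of_int (sign p) * (\<Prod>i = 0..<n. A $$ (i, p i))\<bar>"
    by (simp add: det_def'[OF A])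
  also have "\<dots> \<le> (\<Sum>p | p permutes {0..<n}. \<bar>of_int (sign p) * (\<Prod>i = 0..<n. A $$ (i, p i))\<bar>)"
    by (rule sum_abs)
  also have "\<dots> \<le> (\<Sum>p | p permutes {0..<n}. c ^ n)"
  proof (rule sum_mono)
    fix p assume "p \<in> {p. p permutes {0..<n}}"
    hence p: "p permutes {0..<n}" by simp
    have "\<bar>of_int (sign p) * (\<Prod>i = 0..<n. A $$ (i, p i))\<bar> = (\<Prod>i = 0..<n. \<bar>A $$ (i, p i)\<bar>)"
      by (simp add: abs_mult sign_def abs_prod)
    also have "\<dots> \<le> (\<Prod>i = 0..<n. c)"
    proof (rule prod_mono)
      fix i assume "i \<in> {0..<n}"
      hence "i < n" "p i < n" using permutes_in_image[OF p] by auto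
      thus "0 \<le> \<bar>A $$ (i, p i)\<bar> \<and> \<bar>A $$ (i, p i)\<bar> \<le> c" using b by auto
    qed
    finally show "\<bar>of_int (sign p) * (\<Prod>i = 0..<n. A $$ (i, p i))\<bar> \<le> c ^ n" by simp
  qed
  also have "\<dots> = fact n * c ^ n"
    by (simp add: card_permutations)
  finally show ?thesis .
qed







lemma sep_points:
  fixes \<Omega> :: "'a::topological_space set" and X B :: "('a \<Rightarrow> real) set"
  assumes XC: "X \<subseteq> Cfun \<Omega>" and fin: "finite B" and ind: "\<not> Modules.module.dependent fscale B"
    and sp: "Modules.module.span fscale B = X"
  shows "\<exists>P. finite P \<and> P \<subseteq> \<Omega> \<and> card P \<le> card B \<and> (\<forall>f\<in>X. (\<forall>x\<in>P. f x = 0) \<longrightarrow> f = 0)"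
proof -
  interpret M: Modules.module "fscale :: real \<Rightarrow> ('a \<Rightarrow> real) \<Rightarrow> 'a \<Rightarrow> real" by (rule module_fscale)
  interpret V: Vector_Spaces.vector_space "fscale :: real \<Rightarrow> ('a \<Rightarrow> real) \<Rightarrow> 'a \<Rightarrow> real" by (rule vs_fscale)
  define Tri where "Tri k \<longleftrightarrow> (\<exists>(x::nat \<Rightarrow> 'a) (g::nat \<Rightarrow> 'a \<Rightarrow> real). \<forall>j<k. g j \<in> X \<and> x j \<in> \<Omega> \<and> g j (x j) \<noteq> 0 \<and> (\<forall>i<j. g j (x i) = 0))" for k
  have bound: "k \<le> card B" if "Tri k" for k
  proof -
    obtain x g where H: "\<And>j. j < k \<Longrightarrow> g j \<in> X \<and> x j \<in> \<Omega> \<and> g j (x j) \<noteq> 0 \<and> (\<forall>i<j. g j (x i) = 0)"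
      using \<open>Tri k\<close> unfolding Tri_def by blast
    have inj: "inj_on g {..<k}"
    proof (rule inj_onI)
      fix i j assume i: "i \<in> {..<k}" and j: "j \<in> {..<k}" and e: "g i = g j"
      show "i = j"
      proof (rule ccontr)
        assume "i \<noteq> j"
        then consider "i < j" | "j < i" by linarith
        thus False
        proof cases
          case 1 thus False using H[of j] H[of i] i j e by auto
        next
          case 2 thus False using H[of j] H[of i] i j e by auto
        qed
      qed
    qed
    have indep: "\<not> M.dependent (g ` {..<k})"
    proof
      assume "M.dependent (g ` {..<k})"
      then obtain u where u: "\<exists>v\<in>g ` {..<k}. u v \<noteq> 0" and s: "(\<Sum>v\<in>g ` {..<k}. fscale (u v) v) = 0"
        using M.dependent_finite[of "g ` {..<k}"] by auto
      have s2: "(\<Sum>j<k. fscale (u (g j)) (g j)) = 0"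
        using s sum.reindex[OF inj, of "\<lambda>v. fscale (u v) v"] by simp
      have ev: "(\<Sum>j<k. u (g j) * g j (x i)) = 0" for i
        using arg_cong[OF s2, of "\<lambda>h. h (x i)"] by (simp add: sum_fun_app fscale_def)
      have z: "i < k \<longrightarrow> u (g i) = 0" for i
      proof (induction i rule: less_induct)
        case (less i)
        show ?case
        proof
          assume ik: "i < k"
          have "(\<Sum>j<k. u (g j) * g j (x i)) = u (g i) * g i (x i) + (\<Sum>j\<in>{..<k}-{i}. u (g j) * g j (x i))"
            using ik by (simp add: sum.remove[of "{..<k}" i])
          also have "(\<Sum>j\<in>{..<k}-{i}. u (g j) * g j (x i)) = 0"
          proof (rule sum.neutral, rule ballI)
            fix j assume "j \<in> {..<k}-{i}"
            hence jk: "j < k" "j \<noteq> i" by auto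
            show "u (g j) * g j (x i) = 0"
            proof (cases "j < i")
              case True thus ?thesis using less.IH[of j] jk by simp
            next
              case False hence "i < j" using jk by simp
              thus ?thesis using H[of j] jk by simp
            qed
          qed
          finally have "u (g i) * g i (x i) = 0" using ev[of i] by simp
          thus "u (g i) = 0" using H[OF ik] by simp
        qed
      qed
      from u obtain j where "j < k" "u (g j) \<noteq> 0" by auto
      thus False using z[of j] by simp
    qed
    have sub: "g ` {..<k} \<subseteq> M.span B" using H sp by auto
    have "card (g ` {..<k}) \<le> card B"
      using V.independent_span_bound[OF fin indep sub] by simp
    thus ?thesis using card_image[OF inj] by simp
  qed
  have T0: "Tri 0" unfolding Tri_def by simp
  define k0 where "k0 = (GREATEST k. Tri k)"
  have Tk0: "Tri k0" unfolding k0_def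
    by (rule GreatestI_nat[where P=Tri, OF T0]) (use bound in blast)
  have kmax: "k \<le> k0" if "Tri k" for k unfolding k0_def
    by (rule Greatest_le_nat[where P=Tri, OF that]) (use bound in blast)
  obtain x g where H: "\<And>j. j < k0 \<Longrightarrow> g j \<in> X \<and> x j \<in> \<Omega> \<and> g j (x j) \<noteq> 0 \<and> (\<forall>i<j. g j (x i) = 0)"
    using Tk0 unfolding Tri_def by blast
  define P where "P = x ` {..<k0}"
  have "finite P" "P \<subseteq> \<Omega>" using H by (auto simp: P_def)
  moreover have "card P \<le> card B"
    using card_image_le[of "{..<k0}" x] bound[OF Tk0] by (simp add: P_def)
  moreover have "\<forall>f\<in>X. (\<forall>x\<in>P. f x = 0) \<longrightarrow> f = 0"
  proof (intro ballI impI)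
    fix f assume fX: "f \<in> X" and f0: "\<forall>x\<in>P. f x = 0"
    show "f = 0"
    proof (rule ccontr)
      assume "f \<noteq> 0"
      then obtain y where fy: "f y \<noteq> 0" by (auto simp: fun_eq_iff)
      have yO: "y \<in> \<Omega>" using fX XC fy by (auto simp: Cfun_def)
      have "Tri (Suc k0)"
        unfolding Tri_def
      proof (intro exI[of _ "x(k0 := y)"] exI[of _ "g(k0 := f)"] allI impI)
        fix j assume "j < Suc k0"
        then consider "j < k0" | "j = k0" by linarith
        thus "(g(k0 := f)) j \<in> X \<and> (x(k0 := y)) j \<in> \<Omega> \<and> (g(k0 := f)) j ((x(k0 := y)) j) \<noteq> 0 \<and>
          (\<forall>i<j. (g(k0 := f)) j ((x(k0 := y)) i) = 0)"
        proof cases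
          case 1 thus ?thesis using H[OF 1] by auto
        next
          case 2 thus ?thesis using fX yO fy f0 by (auto simp: P_def)
        qed
      qed
      thus False using kmax by fastforce
    qed
  qed
  ultimately show ?thesis by blast
qed





lemma gram_dims[simp]: "dim_row (gram n m W) = n" "dim_col (gram n m W) = n"
  by (simp_all add: gram_def)

lemma nonsing:
  fixes \<phi> :: "nat \<Rightarrow> (nat \<Rightarrow> real) \<Rightarrow> real" and B X :: "((nat \<Rightarrow> real) \<Rightarrow> real) set"
  assumes bij: "bij_betw \<phi> {..<N} B" and fin: "finite B"
    and ind: "\<not> Modules.module.dependent fscale B" and sp: "Modules.module.span fscale B = X"
    and P0: "\<forall>f\<in>X. (\<forall>x\<in>P. f x = 0) \<longrightarrow> f = 0" and cov: "P \<subseteq> \<xi> ` {..<m}"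
  shows "mdet (gram N m (\<lambda>j i. \<phi> i (\<xi> j))) \<noteq> 0"
proof
  interpret M: Modules.module "fscale :: real \<Rightarrow> ((nat \<Rightarrow> real) \<Rightarrow> real) \<Rightarrow> (nat \<Rightarrow> real) \<Rightarrow> real"
    by (rule module_fscale)
  define W where "W = (\<lambda>j i. \<phi> i (\<xi> j))"
  assume "mdet (gram N m (\<lambda>j i. \<phi> i (\<xi> j))) = 0"
  then obtain a where a: "a \<in> carrier_vec N" "a \<noteq> 0\<^sub>v N" "gram N m W *\<^sub>v a = 0\<^sub>v N"
    using det_0_iff_vec_prod_zero_field[OF gram_carr] unfolding W_def by blast
  define \<alpha> where "\<alpha> i = a $ i" for i
  have mv0: "mvp N (gram N m W) \<alpha> i = 0" if "i < N" for i
  proof -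
    have "(gram N m W *\<^sub>v a) $ i = 0" using a(3) that by simp
    moreover have "(gram N m W *\<^sub>v a) $ i = (\<Sum>l<N. gram N m W $$ (i,l) * a $ l)"
      using that a(1) by (simp add: scalar_prod_def atLeast0LessThan)
    ultimately show ?thesis by (simp add: mvp_def \<alpha>_def)
  qed
  have "dotp N \<alpha> (mvp N (gram N m W) \<alpha>) = 0"
    unfolding dotp_def by (rule sum.neutral) (simp add: mv0)
  hence "(\<Sum>j<m. (dotp N \<alpha> (W j))\<^sup>2) = 0" by (simp add: dot_G power2_eq_square)
  hence dz: "dotp N \<alpha> (W j) = 0" if "j < m" for j
    using sum_nonneg_eq_0_iff[of "{..<m}" "\<lambda>j. (dotp N \<alpha> (W j))\<^sup>2"] that by simp
  define f where "f = (\<Sum>i<N. fscale (\<alpha> i) (\<phi> i))"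
  have fX: "f \<in> X" unfolding f_def sp[symmetric]
    using bij by (intro M.span_sum M.span_scale M.span_base) (auto simp: bij_betw_def)
  have fv: "f p = dotp N \<alpha> (\<lambda>i. \<phi> i p)" for p
    by (simp add: f_def sum_fun_app fscale_def dotp_def)
  have "\<forall>x\<in>P. f x = 0"
  proof
    fix x assume "x \<in> P"
    then obtain j where "j < m" "x = \<xi> j" using cov by auto
    thus "f x = 0" using dz[of j] fv[of x] by (simp add: W_def)
  qed
  hence f0: "f = 0" using P0 fX by simp
  define u where "u b = \<alpha> (inv_into {..<N} \<phi> b)" for b
  have inj: "inj_on \<phi> {..<N}" using bij by (simp add: bij_betw_def)
  have "(\<Sum>b\<in>B. fscale (u b) b) = (\<Sum>i<N. fscale (u (\<phi> i)) (\<phi> i))"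
    by (rule sum.reindex_bij_betw[OF bij, symmetric])
  also have "\<dots> = f" unfolding f_def u_def using inj by (intro sum.cong refl) simp
  finally have "(\<Sum>b\<in>B. fscale (u b) b) = 0" using f0 by simp
  hence ub: "\<forall>b\<in>B. u b = 0"
  proof -
    assume s0: "(\<Sum>b\<in>B. fscale (u b) b) = 0"
    show ?thesis
    proof (rule ccontr)
      assume "\<not> (\<forall>b\<in>B. u b = 0)"
      hence "\<exists>v\<in>B. u v \<noteq> 0" by simp
      hence "M.dependent B" unfolding M.dependent_finite[OF fin] using s0 by (intro exI[of _ u]) simp
      thus False using ind by simp
    qed
  qed
  have "a = 0\<^sub>v N"
  proof (rule eq_vecI)
    fix i assume "i < dim_vec (0\<^sub>v N :: real vec)"
    hence i: "i < N" by simp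
    have "\<phi> i \<in> B" using bij i by (auto simp: bij_betw_def)
    hence "u (\<phi> i) = 0" using ub by blast
    thus "a $ i = 0\<^sub>v N $ i" using inj i by (simp add: u_def \<alpha>_def)
  qed (use a(1) in simp)
  thus False using a(2) by simp
qed




lemma abs_sum_sq_bound:
  fixes M0 :: real
  assumes "\<And>j. j < m \<Longrightarrow> \<bar>a j\<bar> \<le> M0" "\<And>j. j < m \<Longrightarrow> \<bar>b j\<bar> \<le> M0"
  shows "\<bar>\<Sum>j<m. a j * b j\<bar> \<le> real m * M0\<^sup>2"
proof -
  have "\<bar>\<Sum>j<m. a j * b j\<bar> \<le> (\<Sum>j<m. \<bar>a j * b j\<bar>)" by (rule sum_abs)
  also have "\<dots> \<le> (\<Sum>j<m. M0 * M0)"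
  proof (rule sum_mono)
    fix j assume "j \<in> {..<m}"
    hence j: "j < m" by simp
    show "\<bar>a j * b j\<bar> \<le> M0 * M0" unfolding abs_mult
      by (rule mult_mono) (use assms[OF j] in auto)
  qed
  finally show ?thesis by (simp add: power2_eq_square)
qed

theorem corollary2p1:
  shows "\<exists>C1 C2::real. C1 > 0 \<and> C2 > 0 \<and>
    (\<forall>(d::nat) (\<Omega>::(nat \<Rightarrow> real) set) (N::nat) (X::((nat \<Rightarrow> real) \<Rightarrow> real) set).
       \<Omega> \<subseteq> Rd d \<and> compact \<Omega> \<and> N \<ge> 1 \<and> dim_subspace_C \<Omega> X N \<longrightarrow>
       (\<exists>P. finite P \<and> P \<noteq> {} \<and> P \<subseteq> \<Omega> \<and> real (card P) \<le> C1 * real N \<and>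
          (\<forall>f\<in>X. \<forall>x\<in>\<Omega>. \<bar>f x\<bar> \<le> C2 * sqrt (real N) * Max ((\<lambda>\<xi>. \<bar>f \<xi>\<bar>) ` P))))"
proof -
  have main:
    "\<forall>(d::nat) (\<Omega>::(nat \<Rightarrow> real) set) (N::nat) (X::((nat \<Rightarrow> real) \<Rightarrow> real) set).
       \<Omega> \<subseteq> Rd d \<and> compact \<Omega> \<and> N \<ge> 1 \<and> dim_subspace_C \<Omega> X N \<longrightarrow>
       (\<exists>P. finite P \<and> P \<noteq> {} \<and> P \<subseteq> \<Omega> \<and> real (card P) \<le> 2 * real N \<and>
          (\<forall>f\<in>X. \<forall>x\<in>\<Omega>. \<bar>f x\<bar> \<le> sqrt 2 * sqrt (real N) * Max ((\<lambda>\<xi>. \<bar>f \<xi>\<bar>) ` P)))"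
  proof (intro allI impI)
  fix d :: nat and \<Omega> :: "(nat \<Rightarrow> real) set" and N :: nat and X :: "((nat \<Rightarrow> real) \<Rightarrow> real) set"
  assume A: "\<Omega> \<subseteq> Rd d \<and> compact \<Omega> \<and> N \<ge> 1 \<and> dim_subspace_C \<Omega> X N"
  hence cpt: "compact \<Omega>" and N1: "N \<ge> 1" and dsc: "dim_subspace_C \<Omega> X N" by auto
  interpret M: Modules.module "fscale :: real \<Rightarrow> ((nat \<Rightarrow> real) \<Rightarrow> real) \<Rightarrow> (nat \<Rightarrow> real) \<Rightarrow> real"
    by (rule module_fscale)
  obtain B where XC: "X \<subseteq> Cfun \<Omega>" and fin: "finite B" and cB: "card B = N"
    and ind: "\<not> M.dependent B" and sp: "M.span B = X"
    using dsc unfolding dim_subspace_C_def by blast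
  obtain \<phi> where bij0: "bij_betw \<phi> {0..<card B} B" using ex_bij_betw_nat_finite[OF fin] by blast
  have bij: "bij_betw \<phi> {..<N} B" using bij0 cB by (simp add: atLeast0LessThan)
  have phiB: "\<phi> i \<in> B" if "i < N" for i using bij that by (auto simp: bij_betw_def)
  have phiX: "\<phi> i \<in> X" if "i < N" for i using phiB[OF that] sp M.span_base by blast
  have phiC: "continuous_on \<Omega> (\<phi> i)" if "i < N" for i using phiX[OF that] XC by (auto simp: Cfun_def)
  have "\<exists>b. \<forall>x\<in>\<Omega>. \<bar>\<phi> i x\<bar> \<le> b" if "i < N" for i
  proof -
    have "bounded (\<phi> i ` \<Omega>)"
      by (rule compact_imp_bounded, rule compact_continuous_image[OF phiC[OF that] cpt])
    then obtain b where "\<forall>y\<in>\<phi> i ` \<Omega>. \<bar>y\<bar> \<le> b" unfolding bounded_real by blast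
    thus ?thesis by auto
  qed
  then obtain bf where bf: "\<And>i x. i < N \<Longrightarrow> x \<in> \<Omega> \<Longrightarrow> \<bar>\<phi> i x\<bar> \<le> bf i" by metis
  define M0 where "M0 = (\<Sum>i<N. \<bar>bf i\<bar>)"
  have M0: "\<bar>\<phi> i x\<bar> \<le> M0" if "i < N" "x \<in> \<Omega>" for i x
  proof -
    have "\<bar>\<phi> i x\<bar> \<le> \<bar>bf i\<bar>" using bf[OF that] by simp
    also have "\<bar>bf i\<bar> \<le> M0" unfolding M0_def
      by (rule member_le_sum) (use that in auto)
    finally show ?thesis .
  qed
  define m where "m = 2 * N"
  define W where "W \<xi> = (\<lambda>j i. \<phi> i (\<xi> j))" for \<xi> :: "nat \<Rightarrow> nat \<Rightarrow> real"
  define S where "S = {\<xi> :: nat \<Rightarrow> nat \<Rightarrow> real. \<forall>j<m. \<xi> j \<in> \<Omega>}"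
  define D where "D \<xi> = \<bar>mdet (gram N m (W \<xi>))\<bar>" for \<xi>
  have Dle: "D \<xi> \<le> fact N * (real m * M0\<^sup>2) ^ N" if "\<xi> \<in> S" for \<xi>
    unfolding D_def
  proof (rule det_bound[OF gram_carr])
    fix i l assume il: "i < N" "l < N"
    have "gram N m (W \<xi>) $$ (i,l) = (\<Sum>j<m. \<phi> i (\<xi> j) * \<phi> l (\<xi> j))"
      using il by (simp add: gram_index W_def)
    also have "\<bar>\<dots>\<bar> \<le> real m * M0\<^sup>2"
      by (rule abs_sum_sq_bound) (use that il M0 in \<open>auto simp: S_def\<close>)
    finally show "\<bar>gram N m (W \<xi>) $$ (i,l)\<bar> \<le> real m * M0\<^sup>2" .
  qed
  have bdd: "bdd_above (D ` S)" using Dle by (intro bdd_aboveI) auto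
  obtain P0 where P0: "finite P0" "P0 \<subseteq> \<Omega>" "card P0 \<le> card B"
      "\<forall>f\<in>X. (\<forall>x\<in>P0. f x = 0) \<longrightarrow> f = 0"
    using sep_points[OF XC fin ind sp] by blast
  have One: "\<Omega> \<noteq> {}"
  proof
    assume e: "\<Omega> = {}"
    have "\<phi> 0 \<in> X" using phiX N1 by simp
    hence "\<phi> 0 = 0" using XC e by (auto simp: Cfun_def fun_eq_iff)
    moreover have "\<phi> 0 \<in> B" using phiB N1 by simp
    ultimately have "M.dependent B" using M.dependent_zero by metis
    thus False using ind by simp
  qed
  then obtain z0 where z0: "z0 \<in> \<Omega>" by blast
  obtain e where e: "bij_betw e {0..<card P0} P0" using ex_bij_betw_nat_finite[OF P0(1)] by blast
  define \<xi>0 where "\<xi>0 j = (if j < card P0 then e j else z0)" for j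
  have \<xi>0S: "\<xi>0 \<in> S" using e z0 P0(2) by (auto simp: S_def \<xi>0_def bij_betw_def)
  have cov0: "P0 \<subseteq> \<xi>0 ` {..<m}"
  proof
    fix p assume "p \<in> P0"
    hence "p \<in> e ` {0..<card P0}" using e by (simp add: bij_betw_def)
    then obtain j where j0: "j \<in> {0..<card P0}" "p = e j" by blast
    hence j: "j < card P0" "p = e j" by auto
    hence "j < m" using P0(3) cB by (simp add: m_def)
    thus "p \<in> \<xi>0 ` {..<m}" using j by (auto simp: \<xi>0_def)
  qed
  have D0: "D \<xi>0 > 0"
    using nonsing[OF bij fin ind sp P0(4) cov0] by (simp add: D_def W_def)
  define s where "s = Sup (D ` S)"
  have sD: "D \<xi> \<le> s" if "\<xi> \<in> S" for \<xi> unfolding s_def by (rule cSup_upper) (use that bdd in auto)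
  have s0: "s > 0" using sD[OF \<xi>0S] D0 by simp
  define \<theta> where "\<theta> = 1 + 1 / (2 * real N)"
  have \<theta>1: "\<theta> > 1" using N1 by (simp add: \<theta>_def)
  have "s / \<theta> < s" using s0 \<theta>1 by (simp add: divide_less_eq)
  hence "\<exists>d\<in>D ` S. s / \<theta> < d" unfolding s_def
    using less_cSup_iff[of "D ` S" "s / \<theta>"] \<xi>0S bdd by (auto simp: s_def)
  then obtain \<xi> where \<xi>S: "\<xi> \<in> S" and big: "s / \<theta> < D \<xi>" by blast
  have Dpos: "D \<xi> > 0" using big s0 \<theta>1 by (smt (verit) divide_pos_pos)
  have dG: "mdet (gram N m (W \<xi>)) \<noteq> 0" using Dpos by (simp add: D_def)
  have opt: "\<bar>mdet (gram N m ((W \<xi>)(k := (\<lambda>i. \<phi> i x))))\<bar> \<le> \<theta> * \<bar>mdet (gram N m (W \<xi>))\<bar>"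
    if k: "k < m" and x: "x \<in> \<Omega>" for k x
  proof -
    have upd: "(W \<xi>)(k := (\<lambda>i. \<phi> i x)) = W (\<xi>(k := x))" by (auto simp: W_def fun_eq_iff)
    have "\<xi>(k := x) \<in> S" using \<xi>S x by (auto simp: S_def)
    hence "D (\<xi>(k := x)) \<le> s" by (rule sD)
    also have "s \<le> \<theta> * D \<xi>" using big \<theta>1 by (simp add: divide_less_eq less_imp_le mult.commute)
    finally show ?thesis by (simp add: upd D_def)
  qed
  define P where "P = \<xi> ` {..<m}"
  have Pfin: "finite P" and Pne: "P \<noteq> {}" and PO: "P \<subseteq> \<Omega>"
    using N1 \<xi>S by (auto simp: P_def m_def S_def lessThan_empty_iff)
  have Pcard: "real (card P) \<le> 2 * real N"
  proof -
    have "card P \<le> m" unfolding P_def using card_image_le[of "{..<m}" \<xi>] by simp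
    thus ?thesis by (simp add: m_def)
  qed
  show "\<exists>P. finite P \<and> P \<noteq> {} \<and> P \<subseteq> \<Omega> \<and> real (card P) \<le> 2 * real N \<and>
          (\<forall>f\<in>X. \<forall>x\<in>\<Omega>. \<bar>f x\<bar> \<le> sqrt 2 * sqrt (real N) * Max ((\<lambda>\<xi>. \<bar>f \<xi>\<bar>) ` P))"
  proof (intro exI[of _ P] conjI ballI)
    show "finite P" "P \<noteq> {}" "P \<subseteq> \<Omega>" "real (card P) \<le> 2 * real N" by fact+
    fix f x assume fX: "f \<in> X" and x: "x \<in> \<Omega>"
    obtain u where u: "f = (\<Sum>b\<in>B. fscale (u b) b)"
      using fX M.span_finite[OF fin] sp by auto
    define \<alpha> where "\<alpha> i = u (\<phi> i)" for i
    have fv: "f y = dotp N \<alpha> (\<lambda>i. \<phi> i y)" for y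
    proof -
      have "f = (\<Sum>i<N. fscale (u (\<phi> i)) (\<phi> i))"
        unfolding u by (rule sum.reindex_bij_betw[OF bij, symmetric])
      thus ?thesis by (simp add: sum_fun_app fscale_def dotp_def \<alpha>_def)
    qed
    define Mx where "Mx = Max ((\<lambda>\<xi>. \<bar>f \<xi>\<bar>) ` P)"
    have Mx: "\<bar>f (\<xi> j)\<bar> \<le> Mx" if "j < m" for j
      unfolding Mx_def by (rule Max_ge) (use Pfin that in \<open>auto simp: P_def\<close>)
    have Mx0: "0 \<le> Mx" using Mx[of 0] N1 by (simp add: m_def)
    have opt': "\<bar>mdet (gram N m ((W \<xi>)(k := (\<lambda>i. \<phi> i x))))\<bar> \<le> (1 + 1 / (2 * real N)) * \<bar>mdet (gram N m (W \<xi>))\<bar>"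
      if "k < m" for k
      using opt[OF that x] unfolding \<theta>_def .
    have "(dotp N \<alpha> (\<lambda>i. \<phi> i x))\<^sup>2 \<le> (\<Sum>j<m. (dotp N \<alpha> (W \<xi> j))\<^sup>2)"
      by (rule key_bound[OF dG m_def N1 opt'])
    hence "(f x)\<^sup>2 \<le> (\<Sum>j<m. (f (\<xi> j))\<^sup>2)" by (simp add: fv W_def)
    also have "\<dots> \<le> (\<Sum>j<m. Mx\<^sup>2)"
    proof (rule sum_mono)
      fix j assume "j \<in> {..<m}"
      hence "\<bar>f (\<xi> j)\<bar> \<le> Mx" using Mx by simp
      hence "\<bar>f (\<xi> j)\<bar>\<^sup>2 \<le> Mx\<^sup>2" by (rule power_mono) simp
      thus "(f (\<xi> j))\<^sup>2 \<le> Mx\<^sup>2" by simp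
    qed
    also have "\<dots> = (sqrt (real m) * Mx)\<^sup>2" by (simp add: power_mult_distrib)
    finally have "\<bar>f x\<bar>\<^sup>2 \<le> (sqrt (real m) * Mx)\<^sup>2" by simp
    hence "\<bar>f x\<bar> \<le> sqrt (real m) * Mx"
      by (rule power2_le_imp_le) (use Mx0 in simp)
    also have "sqrt (real m) = sqrt 2 * sqrt (real N)" by (simp add: m_def real_sqrt_mult)
    finally show "\<bar>f x\<bar> \<le> sqrt 2 * sqrt (real N) * Max ((\<lambda>\<xi>. \<bar>f \<xi>\<bar>) ` P)" by (simp add: Mx_def)
  qed
qed
  show ?thesis
    apply (rule exI[of _ "2::real"], rule exI[of _ "sqrt 2::real"])
    apply (rule conjI, simp)
    apply (rule conjI, simp)
    by (rule main)
qed


end
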